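(* Let $G$ be a group generated by a finite symmetric set $S$ and let $|\cdot|\colon S\to\{0,1\}$ be a pseudolength on $S$, extended to the word pseudonorm $|g|=\min\{\sum_{i=1}^k|s_i| : g=s_1\cdots s_k,\ s_i\in S\}$ on $G$. If the subgroup $G_0=\langle\{s\in S : |s|=0\}\rangle$ is finite, then for every $n\in\mathbb{N}$ the set $B_{G,S,|\cdot|}(n)=\{g\in G : |g|\le n\}$ is finite, so the function $\gamma_{G,S,|\cdot|}(n)=|B_{G,S,|\cdot|}(n)|$ is well defined, and $\gamma_{G,S,|\cdot|}\sim\gamma_{G,S}$, where $\gamma_{G,S}$ is the usual growth function obtained by giving length $1$ to each generator.
   Context: For non-decreasing $f,g\colon\mathbb{N}\to\mathbb{N}$, write $f\lesssim g$ if there exists $C\in\mathbb{N}_{>0}$ with $f(n)\le g(Cn)$ for all $n\ge1$, and $f\sim g$ if $f\lesssim g$ and $g\lesssim f$. $\gamma_{G,S}(n)$ is the number of elements of $G$ of word length at most $n$ with respect to $S$. *)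

theory Defs
  imports "HOL-Algebra.Generated_Groups"
begin

definition word_prod :: "('a, 'b) monoid_scheme \<Rightarrow> 'a list \<Rightarrow> 'a" where
  "word_prod G ws = foldr (\<lambda>s acc. s \<otimes>\<^bsub>G\<^esub> acc) ws \<one>\<^bsub>G\<^esub>"

definition word_pnorm :: "('a, 'b) monoid_scheme \<Rightarrow> 'a set \<Rightarrow> ('a \<Rightarrow> nat) \<Rightarrow> 'a \<Rightarrow> nat" where
  "word_pnorm G S pl g =
     (LEAST n. \<exists>ws. set ws \<subseteq> S \<and> word_prod G ws = g \<and> sum_list (map pl ws) = n)"

definition pball :: "('a, 'b) monoid_scheme \<Rightarrow> 'a set \<Rightarrow> ('a \<Rightarrow> nat) \<Rightarrow> nat \<Rightarrow> 'a set" where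
  "pball G S pl n = {g \<in> carrier G. word_pnorm G S pl g \<le> n}"

definition pgrowth :: "('a, 'b) monoid_scheme \<Rightarrow> 'a set \<Rightarrow> ('a \<Rightarrow> nat) \<Rightarrow> nat \<Rightarrow> nat" where
  "pgrowth G S pl n = card (pball G S pl n)"

definition growth :: "('a, 'b) monoid_scheme \<Rightarrow> 'a set \<Rightarrow> nat \<Rightarrow> nat" where
  "growth G S = pgrowth G S (\<lambda>_. 1)"

definition dominated :: "(nat \<Rightarrow> nat) \<Rightarrow> (nat \<Rightarrow> nat) \<Rightarrow> bool" where
  "dominated f g \<longleftrightarrow> (\<exists>C::nat. C > 0 \<and> (\<forall>n\<ge>1. f n \<le> g (C * n)))"

definition growth_equiv :: "(nat \<Rightarrow> nat) \<Rightarrow> (nat \<Rightarrow> nat) \<Rightarrow> bool" where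
  "growth_equiv f g \<longleftrightarrow> dominated f g \<and> dominated g f"

end

theory Submission
  imports Defs
begin

lemma wp_Nil[simp]: "word_prod G [] = \<one>\<^bsub>G\<^esub>"
  by (simp add: word_prod_def)

lemma wp_Cons[simp]: "word_prod G (s # ws) = s \<otimes>\<^bsub>G\<^esub> word_prod G ws"
  by (simp add: word_prod_def)

lemma (in monoid) wp_closed: "set ws \<subseteq> carrier G \<Longrightarrow> word_prod G ws \<in> carrier G"
  by (induction ws) auto

lemma (in monoid) wp_append:
  "set xs \<subseteq> carrier G \<Longrightarrow> set ys \<subseteq> carrier G \<Longrightarrow>
   word_prod G (xs @ ys) = word_prod G xs \<otimes> word_prod G ys"
  by (induction xs) (auto simp: m_assoc wp_closed)

lemma (in group) gen_word:
  assumes "A \<subseteq> S" "S \<subseteq> carrier G" "\<forall>s\<in>S. inv s \<in> S" "g \<in> generate G A"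
  shows "\<exists>ws. set ws \<subseteq> S \<and> word_prod G ws = g"
  using assms(4)
proof (induction rule: generate.induct)
  case one
  then show ?case by (intro exI[of _ "[]"]) simp
next
  case (incl h)
  then show ?case using assms by (intro exI[of _ "[h]"]) auto
next
  case (inv h)
  then show ?case using assms by (intro exI[of _ "[inv h]"]) auto
next
  case (eng h1 h2)
  then obtain w1 w2 where "set w1 \<subseteq> S" "word_prod G w1 = h1" "set w2 \<subseteq> S" "word_prod G w2 = h2"
    by blast
  then show ?case using assms(2) wp_append[of w1 w2]
    by (intro exI[of _ "w1 @ w2"]) auto
qed

lemma pnorm_le_iff:
  assumes "\<exists>ws. set ws \<subseteq> S \<and> word_prod G ws = g"
  shows "word_pnorm G S pl g \<le> n \<longleftrightarrow>
     (\<exists>ws. set ws \<subseteq> S \<and> word_prod G ws = g \<and> sum_list (map pl ws) \<le> n)"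
proof
  let ?P = "\<lambda>n. \<exists>ws. set ws \<subseteq> S \<and> word_prod G ws = g \<and> sum_list (map pl ws) = n"
  have ex: "\<exists>n. ?P n"
    using assms by blast
  assume "word_pnorm G S pl g \<le> n"
  moreover have "?P (word_pnorm G S pl g)"
    unfolding word_pnorm_def by (rule LeastI_ex[OF ex])
  ultimately show "\<exists>ws. set ws \<subseteq> S \<and> word_prod G ws = g \<and> sum_list (map pl ws) \<le> n"
    by auto
next
  assume "\<exists>ws. set ws \<subseteq> S \<and> word_prod G ws = g \<and> sum_list (map pl ws) \<le> n"
  then obtain ws where ws: "set ws \<subseteq> S \<and> word_prod G ws = g \<and> sum_list (map pl ws) \<le> n" by blast
  have "word_pnorm G S pl g \<le> sum_list (map pl ws)" unfolding word_pnorm_def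
    by (rule Least_le) (use ws in blast)
  then show "word_pnorm G S pl g \<le> n" using ws by linarith
qed

lemma sum_pl_le_length:
  "\<forall>s\<in>set ws. pl s \<le> (1::nat) \<Longrightarrow> sum_list (map pl ws) \<le> length ws"
  by (induction ws) auto

theorem mainTheorem6:
  fixes G :: "('a, 'b) monoid_scheme" and S :: "'a set" and pl :: "'a \<Rightarrow> nat"
  assumes "group G"
    and "finite S" and "S \<subseteq> carrier G"
    and "\<forall>s\<in>S. inv\<^bsub>G\<^esub> s \<in> S"
    and "generate G S = carrier G"
    and "\<forall>s\<in>S. pl s \<in> {0, 1}"
    and "finite (generate G {s \<in> S. pl s = 0})"
  shows "(\<forall>n. finite (pball G S pl n)) \<and> growth_equiv (pgrowth G S pl) (growth G S)"
proof -
  interpret group G by fact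
  define H where "H = generate G {s \<in> S. pl s = 0}"
  have Hc: "H \<subseteq> carrier G" unfolding H_def
    using generate_in_carrier[of "{s \<in> S. pl s = 0}"] assms(3) by auto
  have finH: "finite H" using assms(7) unfolding H_def .
  have Hw: "\<forall>h\<in>H. \<exists>ws. set ws \<subseteq> S \<and> word_prod G ws = h"
  proof
    fix h assume hH: "h \<in> H"
    have sub: "{s \<in> S. pl s = 0} \<subseteq> S" by blast
    show "\<exists>ws. set ws \<subseteq> S \<and> word_prod G ws = h"
      by (rule gen_word[OF sub assms(3) assms(4)]) (use hH in \<open>simp add: H_def\<close>)
  qed
  then obtain w where w0: "\<forall>h\<in>H. set (w h) \<subseteq> S \<and> word_prod G (w h) = h"
    by (rule bchoice[elim_format]) blast
  have w: "\<And>h. h \<in> H \<Longrightarrow> set (w h) \<subseteq> S \<and> word_prod G (w h) = h"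
    using w0 by blast
  define M where "M = Max ((\<lambda>h. length (w h)) ` H)"
  have wM: "\<And>h. h \<in> H \<Longrightarrow> length (w h) \<le> M"
    unfolding M_def by (rule Max_ge) (use finH in auto)
  have S0H: "\<And>s. s \<in> S \<Longrightarrow> pl s = 0 \<Longrightarrow> s \<in> H"
    unfolding H_def by (auto intro: generate.incl)
  have Hmul: "\<And>a b. a \<in> H \<Longrightarrow> b \<in> H \<Longrightarrow> a \<otimes>\<^bsub>G\<^esub> b \<in> H"
    unfolding H_def by (auto intro: generate.eng)
  have H1: "\<one>\<^bsub>G\<^esub> \<in> H" unfolding H_def by (rule generate.one)
  have Sc: "\<And>ws. set ws \<subseteq> S \<Longrightarrow> set ws \<subseteq> carrier G" using assms(3) by auto
  have inv: "\<exists>h u. h \<in> H \<and> set u \<subseteq> S \<and> word_prod G ws = h \<otimes>\<^bsub>G\<^esub> word_prod G u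
      \<and> length u \<le> sum_list (map pl ws) * (M + 1)" if "set ws \<subseteq> S" for ws
    using that
  proof (induction ws)
    case Nil
    then show ?case using H1 by (intro exI[of _ "\<one>\<^bsub>G\<^esub>"] exI[of _ "[]"]) auto
  next
    case (Cons s ws)
    then obtain h u where hu: "h \<in> H" "set u \<subseteq> S" "word_prod G ws = h \<otimes>\<^bsub>G\<^esub> word_prod G u"
      "length u \<le> sum_list (map pl ws) * (M + 1)" by auto
    have sS: "s \<in> S" using Cons by auto
    have sc: "s \<in> carrier G" using sS assms(3) by auto
    have hc: "h \<in> carrier G" using hu Hc by auto
    have uc: "word_prod G u \<in> carrier G" using wp_closed Sc hu by auto
    show ?case
    proof (cases "pl s = 0")
      case True
      then show ?thesis using hu sS S0H Hmul sc hc uc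
        by (intro exI[of _ "s \<otimes>\<^bsub>G\<^esub> h"] exI[of _ u]) (auto simp: m_assoc)
    next
      case False
      then have p1: "pl s = 1" using assms(6) sS by auto
      have wh: "set (w h) \<subseteq> S" "word_prod G (w h) = h" "length (w h) \<le> M"
        using w wM hu by auto
      have "word_prod G (s # w h @ u) = s \<otimes>\<^bsub>G\<^esub> (h \<otimes>\<^bsub>G\<^esub> word_prod G u)"
        using wp_append[of "w h" u] Sc wh hu by simp
      then show ?thesis using hu sS H1 sc hc uc wh p1
        by (intro exI[of _ "\<one>\<^bsub>G\<^esub>"] exI[of _ "s # w h @ u"]) (auto simp: m_assoc)
    qed
  qed
  define B where "B = (\<lambda>(pl'::'a\<Rightarrow>nat) (n::nat). {g. \<exists>ws. set ws \<subseteq> S \<and> word_prod G ws = g \<and> sum_list (map pl' ws) \<le> n})"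
  have ex: "\<exists>ws. set ws \<subseteq> S \<and> word_prod G ws = g" if "g \<in> carrier G" for g
    using gen_word[of S S g] assms(3,4,5) that by blast
  have pb: "pball G S pl' n = B pl' n" for pl' n
  proof -
    have "pball G S pl' n = {g \<in> carrier G. \<exists>ws. set ws \<subseteq> S \<and> word_prod G ws = g \<and> sum_list (map pl' ws) \<le> n}"
      unfolding pball_def using pnorm_le_iff[OF ex] by auto
    also have "\<dots> = B pl' n" unfolding B_def using wp_closed Sc by blast
    finally show ?thesis .
  qed
  have B1: "B (\<lambda>_. 1) n = (word_prod G) ` {xs. set xs \<subseteq> S \<and> length xs \<le> n}" for n
    unfolding B_def by (auto simp: sum_list_triv)
  have finB1: "finite (B (\<lambda>_. 1) n)" for n
    unfolding B1 using finite_lists_length_le[OF assms(2)] by simp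
  have monoB1: "m \<le> n \<Longrightarrow> B (\<lambda>_. 1) m \<subseteq> B (\<lambda>_. 1) n" for m n
    unfolding B_def by fastforce
  have sub1: "B (\<lambda>_. 1) n \<subseteq> B pl n" for n
  proof
    fix g assume "g \<in> B (\<lambda>_. 1) n"
    then obtain ws where ws: "set ws \<subseteq> S" "word_prod G ws = g" "length ws \<le> n"
      unfolding B_def by (auto simp: sum_list_triv)
    have "sum_list (map pl ws) \<le> length ws"
      by (rule sum_pl_le_length) (use ws assms(6) in fastforce)
    then show "g \<in> B pl n" unfolding B_def using ws by auto
  qed
  have sub2: "B pl n \<subseteq> B (\<lambda>_. 1) (M + n * (M + 1))" for n
  proof
    fix g assume "g \<in> B pl n"
    then obtain ws where ws: "set ws \<subseteq> S" "word_prod G ws = g" "sum_list (map pl ws) \<le> n"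
      unfolding B_def by auto
    obtain h u where hu: "h \<in> H" "set u \<subseteq> S" "word_prod G ws = h \<otimes>\<^bsub>G\<^esub> word_prod G u"
      "length u \<le> sum_list (map pl ws) * (M + 1)" using inv[OF ws(1)] by auto
    have wh: "set (w h) \<subseteq> S" "word_prod G (w h) = h" "length (w h) \<le> M"
      using w wM hu by auto
    have e: "word_prod G (w h @ u) = g"
      using wp_append[of "w h" u] Sc wh hu ws by simp
    have "length u \<le> n * (M + 1)" using hu(4) ws(3)
      by (meson le_trans mult_le_mono1)
    then have "length (w h @ u) \<le> M + n * (M + 1)" using wh by simp
    then show "g \<in> B (\<lambda>_. 1) (M + n * (M + 1))" unfolding B_def
      using e wh hu by (auto simp: sum_list_triv intro!: exI[of _ "w h @ u"])
  qed
  have finB: "finite (B pl n)" for n using finite_subset[OF sub2 finB1] .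
  have d1: "dominated (pgrowth G S pl) (growth G S)"
    unfolding dominated_def
  proof (intro exI[of _ "2 * M + 1"] conjI allI impI)
    fix n :: nat assume n: "n \<ge> 1"
    have "M + n * (M + 1) \<le> (2 * M + 1) * n" using n
      by (simp add: algebra_simps)
    then have "B pl n \<subseteq> B (\<lambda>_. 1) ((2 * M + 1) * n)" using sub2 monoB1 by blast
    then show "pgrowth G S pl n \<le> growth G S ((2 * M + 1) * n)"
      unfolding pgrowth_def growth_def pb by (intro card_mono finB1)
  qed simp
  have d2: "dominated (growth G S) (pgrowth G S pl)"
    unfolding dominated_def
    by (intro exI[of _ 1]) (auto simp: pgrowth_def growth_def pb intro!: card_mono finB sub1[simplified])
  show ?thesis using finB d1 d2 pb unfolding growth_equiv_def by auto
qed

end
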